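(* Let $k\ge1$ be an integer and $\alpha>\beta>0$. For every $x\in\mathcal J=(\gamma_{-1},\gamma_1)$, $$ (1-x)^{\alpha+1}(1+x)^{\beta+1}W(x)\le\frac{\rho\sqrt{(\rho^2-\eta^2)(\rho^2-\sigma^2)}}{\rho-1}\,{\bf h}_k^2 . $$
   Context: $y=P_k^{(\alpha,\beta)}(x)$ is the Jacobi polynomial in the standard (Szegő) normalization, orthogonal on $[-1,1]$ with weight $(1-x)^\alpha(1+x)^\beta$, with squared norm ${\bf h}_k^2=\frac{2^{\alpha+\beta+1}\Gamma(k+\alpha+1)\Gamma(k+\beta+1)}{(2k+\alpha+\beta+1)\,k!\,\Gamma(k+\alpha+\beta+1)}$. Put $\eta=\alpha-\beta$, $\sigma=\alpha+\beta$, $\rho=2k+\alpha+\beta$, $W(x)=(\rho^2-\sigma^2)y^2-4(\eta+\sigma x)yy'+4(1-x^2)y'^2$, and $\gamma_j=\frac{j\sqrt{(\rho^2-\eta^2)(\rho^2-\sigma^2)}-\eta\sigma}{\rho^2}$ for $j=\pm1$. *)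

theory Defs
  imports "HOL-Analysis.Analysis"
begin

definition jacobiP :: "nat \<Rightarrow> real \<Rightarrow> real \<Rightarrow> real \<Rightarrow> real" where
  "jacobiP k a b x = (\<Sum>s\<le>k. ((real k + a) gchoose (k - s)) * ((real k + b) gchoose s)
       * ((x - 1) / 2) ^ s * ((x + 1) / 2) ^ (k - s))"

definition jacobi_hsq :: "nat \<Rightarrow> real \<Rightarrow> real \<Rightarrow> real" where
  "jacobi_hsq k a b = 2 powr (a + b + 1) * Gamma (real k + a + 1) * Gamma (real k + b + 1)
      / ((2 * real k + a + b + 1) * fact k * Gamma (real k + a + b + 1))"

definition jacobiW :: "nat \<Rightarrow> real \<Rightarrow> real \<Rightarrow> real \<Rightarrow> real" where
  "jacobiW k a b x =
    (let y = jacobiP k a b x; y' = deriv (jacobiP k a b) x;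
         \<eta> = a - b; \<sigma> = a + b; \<rho> = 2 * real k + a + b
     in (\<rho>^2 - \<sigma>^2) * y^2 - 4 * (\<eta> + \<sigma> * x) * y * y' + 4 * (1 - x^2) * y'^2)"

definition jacobi_gamma :: "nat \<Rightarrow> real \<Rightarrow> real \<Rightarrow> real \<Rightarrow> real" where
  "jacobi_gamma k a b j =
    (let \<eta> = a - b; \<sigma> = a + b; \<rho> = 2 * real k + a + b
     in (j * sqrt ((\<rho>^2 - \<eta>^2) * (\<rho>^2 - \<sigma>^2)) - \<eta> * \<sigma>) / \<rho>^2)"

end

theory Submission
  imports Defs
begin


definition Cb :: "real \<Rightarrow> int \<Rightarrow> real" where
  "Cb r m = (if m < 0 then 0 else r gchoose (nat m))"

lemma Cb_neg[simp]: "m < 0 \<Longrightarrow> Cb r m = 0" by (simp add: Cb_def)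

lemma Cb_B1: "(of_int m + 1) * Cb r (m+1) = (r - of_int m) * Cb r m"
proof (cases "m < 0")
  case True
  then show ?thesis
  proof (cases "m = -1")
    case True then show ?thesis by (simp add: Cb_def)
  qed (simp add: Cb_def)
next
  case False
  then obtain n where n: "m = int n" by (metis nonneg_int_cases not_less)
  have "nat (int n + 1) = Suc n" by simp
  then show ?thesis using gbinomial_mult_1[of r n] n
    by (simp add: Cb_def algebra_simps)
qed

lemma Cb_B2: "r * Cb (r-1) m = (r - of_int m) * Cb r m"
  using gbinomial_absorb_comp[of r "nat m"] by (auto simp add: Cb_def of_nat_nat)

definition hs :: "nat \<Rightarrow> (nat \<Rightarrow> real) \<Rightarrow> real \<Rightarrow> real \<Rightarrow> real" where
  "hs N f X Y = (\<Sum>s\<le>N. f s * X^s * Y^(N-s))"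

lemma hs_X:
  assumes "g 0 = 0" "\<And>s. s \<le> N \<Longrightarrow> g (Suc s) = f s"
  shows "X * hs N f X Y = hs (Suc N) g X Y"
  unfolding hs_def sum.atMost_Suc_shift
  by (simp add: assms sum_distrib_left algebra_simps)

lemma hs_Y:
  assumes "g (Suc N) = 0" "\<And>s. s \<le> N \<Longrightarrow> g s = f s"
  shows "Y * hs N f X Y = hs (Suc N) g X Y"
  unfolding hs_def sum.atMost_Suc
  by (auto simp add: assms sum_distrib_left algebra_simps Suc_diff_le intro!: sum.cong)

lemma hs_cong: "(\<And>s. s \<le> N \<Longrightarrow> f s = g s) \<Longrightarrow> hs N f X Y = hs N g X Y"
  unfolding hs_def by (auto intro!: sum.cong)

lemma hs_add: "hs N f X Y + hs N g X Y = hs N (\<lambda>s. f s + g s) X Y"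
  unfolding hs_def by (simp add: sum.distrib algebra_simps)

lemma hs_diff: "hs N f X Y - hs N g X Y = hs N (\<lambda>s. f s - g s) X Y"
  unfolding hs_def by (simp add: sum_subtractf algebra_simps)

lemma hs_cmult: "c * hs N f X Y = hs N (\<lambda>s. c * f s) X Y"
  unfolding hs_def by (simp add: sum_distrib_left algebra_simps)

lemma hs_zero: "(\<And>s. s \<le> N \<Longrightarrow> f s = 0) \<Longrightarrow> hs N f X Y = 0"
  unfolding hs_def by simp

definition dhs :: "nat \<Rightarrow> (nat \<Rightarrow> real) \<Rightarrow> real \<Rightarrow> real \<Rightarrow> real" where
  "dhs N f X Y = (\<Sum>s\<le>N. f s * (of_nat s * X^(s-1) * Y^(N-s) + of_nat (N-s) * X^s * Y^(N-s-1))) / 2"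

lemma hs_deriv:
  "((\<lambda>x. hs N f ((x-1)/2) ((x+1)/2)) has_real_derivative dhs N f ((x-1)/2) ((x+1)/2)) (at x)"
  unfolding hs_def dhs_def sum_divide_distrib
  apply (auto intro!: derivative_eq_intros DERIV_sum simp: algebra_simps)
  apply (simp add: field_simps)
  done

lemma dhs_Suc: "dhs (Suc n) f X Y = (hs n (\<lambda>j. of_nat (Suc j) * f (Suc j)) X Y + hs n (\<lambda>j. of_nat (Suc n - j) * f j) X Y) / 2"
proof -
  have 1: "(\<Sum>s\<le>Suc n. f s * (of_nat s * X^(s-1) * Y^(Suc n-s))) = hs n (\<lambda>j. of_nat (Suc j) * f (Suc j)) X Y"
    unfolding hs_def sum.atMost_Suc_shift by (simp add: algebra_simps)
  have 2: "(\<Sum>s\<le>Suc n. f s * (of_nat (Suc n - s) * X^s * Y^(Suc n-s-1))) = hs n (\<lambda>j. of_nat (Suc n - j) * f j) X Y"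
    unfolding hs_def sum.atMost_Suc by (auto simp add: algebra_simps intro!: sum.cong)
  show ?thesis unfolding dhs_def 1[symmetric] 2[symmetric] distrib_left sum.distrib by simp
qed

lemma XY_dhs: "X * Y * dhs N f X Y = (Y * hs N (\<lambda>s. of_nat s * f s) X Y + X * hs N (\<lambda>s. of_nat (N-s) * f s) X Y) / 2"
proof -
  have t: "X * Y * (f s * (of_nat s * X^(s-1) * Y^(N-s) + of_nat (N-s) * X^s * Y^(N-s-1)))
     = Y * (of_nat s * f s * X^s * Y^(N-s)) + X * (of_nat (N-s) * f s * X^s * Y^(N-s))" for s
  proof -
    have a: "of_nat s * X * X^(s-1) = of_nat s * X^s" by (cases s) auto
    have b: "of_nat (N-s) * Y * Y^(N-s-1) = of_nat (N-s) * (Y^(N-s)::real)" by (cases "N-s") auto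
    have "X * Y * (f s * (of_nat s * X^(s-1) * Y^(N-s) + of_nat (N-s) * X^s * Y^(N-s-1)))
       = f s * Y * Y^(N-s) * (of_nat s * X * X^(s-1)) + f s * X * X^s * (of_nat (N-s) * Y * Y^(N-s-1))"
      by (simp add: algebra_simps)
    also have "\<dots> = Y * (of_nat s * f s * X^s * Y^(N-s)) + X * (of_nat (N-s) * f s * X^s * Y^(N-s))"
      unfolding a b by (simp add: algebra_simps)
    finally show ?thesis .
  qed
  have "X * Y * dhs N f X Y = (\<Sum>s\<le>N. X * Y * (f s * (of_nat s * X^(s-1) * Y^(N-s) + of_nat (N-s) * X^s * Y^(N-s-1)))) / 2"
    unfolding dhs_def by (simp add: sum_distrib_left[symmetric])
  also have "\<dots> = ((\<Sum>s\<le>N. Y * (of_nat s * f s * X^s * Y^(N-s))) + (\<Sum>s\<le>N. X * (of_nat (N-s) * f s * X^s * Y^(N-s)))) / 2"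
    unfolding t sum.distrib by simp
  finally show ?thesis unfolding hs_def sum_distrib_left by simp
qed

lemma Cb_B1': "(of_int m) * Cb r m = (r - of_int m + 1) * Cb r (m - 1)"
  using Cb_B1[of "m-1" r] by (simp add: algebra_simps)

lemma coefF1: "(of_int j + 1) * (Cb r (m - j) * Cb t (j+1)) + (of_int (m - j) + 1) * (Cb r (m - j + 1) * Cb t j)
   = (r + t - of_int m) * (Cb r (m-j) * Cb t j)"
proof -
  have 1: "(of_int j + 1) * Cb t (j+1) = (t - of_int j) * Cb t j" by (rule Cb_B1)
  have 2: "(of_int (m-j) + 1) * Cb r (m-j+1) = (r - of_int (m-j)) * Cb r (m-j)" by (rule Cb_B1)
  have "(of_int j + 1) * (Cb r (m - j) * Cb t (j+1)) + (of_int (m - j) + 1) * (Cb r (m - j + 1) * Cb t j)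
     = Cb r (m - j) * ((of_int j + 1) * Cb t (j+1)) + Cb t j * ((of_int (m - j) + 1) * Cb r (m - j + 1))"
    by (simp add: algebra_simps)
  also have "\<dots> = (r + t - of_int m) * (Cb r (m-j) * Cb t j)" unfolding 1 2 by (simp add: algebra_simps)
  finally show ?thesis .
qed

lemma coefE: "(r - of_int (m - j)) * (Cb r (m-j) * Cb t j) + (t - of_int (j - 1)) * (Cb r (m-j+1) * Cb t (j-1))
   = (of_int m + 1) * (Cb r (m-j+1) * Cb t j)"
proof -
  have 1: "(of_int (m-j) + 1) * Cb r (m-j+1) = (r - of_int (m-j)) * Cb r (m-j)" by (rule Cb_B1)
  have 2: "of_int j * Cb t j = (t - of_int j + 1) * Cb t (j - 1)" by (rule Cb_B1')
  have "(r - of_int (m - j)) * (Cb r (m-j) * Cb t j) + (t - of_int (j - 1)) * (Cb r (m-j+1) * Cb t (j-1))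
     = Cb t j * ((r - of_int (m - j)) * Cb r (m-j)) + Cb r (m-j+1) * ((t - of_int j + 1) * Cb t (j-1))"
    by (simp add: algebra_simps)
  also have "\<dots> = Cb t j * ((of_int (m-j) + 1) * Cb r (m-j+1)) + Cb r (m-j+1) * (of_int j * Cb t j)"
    unfolding 1 2 ..
  also have "\<dots> = (of_int m + 1) * (Cb r (m-j+1) * Cb t j)" by (simp add: algebra_simps)
  finally show ?thesis .
qed

lemma coefF3:
  fixes K S :: int and a b r t \<rho> :: real
  assumes r: "r = of_int K + a" and t: "t = of_int K + b" and rho: "\<rho> = 2 * of_int K + a + b"
  shows "(\<rho> * of_int S - of_int K * t) * (Cb r (K-S) * Cb t S) + r*t*(Cb (r-1) (K-1-S) * Cb (t-1) S)
    + (\<rho> * (of_int K - of_int S + 1) - of_int K * r) * (Cb r (K-S+1) * Cb t (S-1))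
    - 2*(r*t*(Cb (r-1) (K-S) * Cb (t-1) (S-1))) + r*t*(Cb (r-1) (K-S+1) * Cb (t-1) (S-2)) = 0"
proof -
  define Rm R0 R1 T0 T1 T2 where "Rm = Cb r (K-1-S)" "R0 = Cb r (K-S)" "R1 = Cb r (K-S+1)"
    "T0 = Cb t S" "T1 = Cb t (S-1)" "T2 = Cb t (S-2)"
  have ha: "r * Cb (r-1) (K-1-S) = (r - of_int (K-1-S)) * Rm" unfolding Rm_R0_R1_T0_T1_T2_def by (rule Cb_B2)
  have hb: "t * Cb (t-1) S = (t - of_int S) * T0" unfolding Rm_R0_R1_T0_T1_T2_def by (rule Cb_B2)
  have hc: "r * Cb (r-1) (K-S) = (r - of_int (K-S)) * R0" unfolding Rm_R0_R1_T0_T1_T2_def by (rule Cb_B2)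
  have hd: "t * Cb (t-1) (S-1) = (t - of_int (S-1)) * T1" unfolding Rm_R0_R1_T0_T1_T2_def by (rule Cb_B2)
  have he: "r * Cb (r-1) (K-S+1) = (r - of_int (K-S+1)) * R1" unfolding Rm_R0_R1_T0_T1_T2_def by (rule Cb_B2)
  have hf: "t * Cb (t-1) (S-2) = (t - of_int (S-2)) * T2" unfolding Rm_R0_R1_T0_T1_T2_def by (rule Cb_B2)
  have g1: "(of_int (K-S)) * R0 = (r - of_int (K-S) + 1) * Rm"
    unfolding Rm_R0_R1_T0_T1_T2_def using Cb_B1'[of "K-S" r] by (simp add: algebra_simps)
  have g2: "(of_int (K-S+1)) * R1 = (r - of_int (K-S+1) + 1) * R0"
    unfolding Rm_R0_R1_T0_T1_T2_def using Cb_B1'[of "K-S+1" r] by (simp add: algebra_simps)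
  have g3: "of_int S * T0 = (t - of_int S + 1) * T1"
    unfolding Rm_R0_R1_T0_T1_T2_def using Cb_B1'[of "S" t] by (simp add: algebra_simps)
  have g4: "of_int (S-1) * T1 = (t - of_int (S-1) + 1) * T2"
    unfolding Rm_R0_R1_T0_T1_T2_def using Cb_B1'[of "S-1" t] by (simp add: algebra_simps)
  have e0: "r*t*(Cb (r-1) (K-1-S) * Cb (t-1) S) = (of_int K - of_int S) * (t - of_int S) * R0 * T0"
  proof -
    have "r*t*(Cb (r-1) (K-1-S) * Cb (t-1) S) = (r * Cb (r-1) (K-1-S)) * (t * Cb (t-1) S)" by simp
    also have "\<dots> = (t - of_int S) * T0 * ((r - of_int (K-S) + 1) * Rm)" unfolding ha hb by simp
    also have "\<dots> = (t - of_int S) * T0 * (of_int (K-S) * R0)" unfolding g1 ..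
    finally show ?thesis by simp
  qed
  have e1: "r*t*(Cb (r-1) (K-S) * Cb (t-1) (S-1)) = (r - of_int K + of_int S) * (t - of_int S + 1) * R0 * T1"
  proof -
    have "r*t*(Cb (r-1) (K-S) * Cb (t-1) (S-1)) = (r * Cb (r-1) (K-S)) * (t * Cb (t-1) (S-1))" by simp
    also have "\<dots> = (r - of_int (K-S)) * R0 * ((t - of_int (S-1)) * T1)" unfolding hc hd ..
    finally show ?thesis by (simp add: algebra_simps)
  qed
  have e2: "r*t*(Cb (r-1) (K-S+1) * Cb (t-1) (S-2)) = (r - of_int K + of_int S - 1) * (of_int S - 1) * R1 * T1"
  proof -
    have "r*t*(Cb (r-1) (K-S+1) * Cb (t-1) (S-2)) = (r * Cb (r-1) (K-S+1)) * (t * Cb (t-1) (S-2))" by simp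
    also have "\<dots> = (r - of_int (K-S+1)) * R1 * ((t - of_int (S-2)) * T2)" unfolding he hf ..
    also have "\<dots> = (r - of_int (K-S+1)) * R1 * ((t - of_int (S-1) + 1) * T2)" by (simp add: algebra_simps)
    also have "\<dots> = (r - of_int (K-S+1)) * R1 * (of_int (S-1) * T1)" unfolding g4 ..
    finally show ?thesis by simp
  qed
  have p1: "(\<rho> * of_int S - of_int K * t + (of_int K - of_int S) * (t - of_int S)) * R0 * T0
      = (a + of_int S) * R0 * (of_int S * T0)" unfolding r t rho by (simp add: algebra_simps)
  have p2: "(\<rho> * (of_int K - of_int S + 1) - of_int K * r + (r - of_int K + of_int S - 1) * (of_int S - 1)) * R1 * T1
      = (t - of_int S + 1) * T1 * (of_int (K-S+1) * R1)" unfolding r t rho by (simp add: algebra_simps)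
  have "(\<rho> * of_int S - of_int K * t) * (R0 * T0) + (of_int K - of_int S) * (t - of_int S) * R0 * T0
    + (\<rho> * (of_int K - of_int S + 1) - of_int K * r) * (R1 * T1)
    - 2*((r - of_int K + of_int S) * (t - of_int S + 1) * R0 * T1) + (r - of_int K + of_int S - 1) * (of_int S - 1) * R1 * T1
    = (\<rho> * of_int S - of_int K * t + (of_int K - of_int S) * (t - of_int S)) * R0 * T0
      + (\<rho> * (of_int K - of_int S + 1) - of_int K * r + (r - of_int K + of_int S - 1) * (of_int S - 1)) * R1 * T1
      - 2*((r - of_int K + of_int S) * (t - of_int S + 1) * R0 * T1)"
    by (simp add: algebra_simps)
  also have "\<dots> = 0" unfolding p1 p2 g2 g3 unfolding r by (simp add: algebra_simps)
  finally have fin: "(\<rho> * of_int S - of_int K * t) * (R0 * T0) + (of_int K - of_int S) * (t - of_int S) * R0 * T0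
    + (\<rho> * (of_int K - of_int S + 1) - of_int K * r) * (R1 * T1)
    - 2*((r - of_int K + of_int S) * (t - of_int S + 1) * R0 * T1) + (r - of_int K + of_int S - 1) * (of_int S - 1) * R1 * T1 = 0" .
  show ?thesis unfolding e0 e1 e2 using fin unfolding Rm_R0_R1_T0_T1_T2_def by simp
qed

definition cf :: "nat \<Rightarrow> real \<Rightarrow> real \<Rightarrow> nat \<Rightarrow> real" where
  "cf k a b s = Cb (real k + a) (int k - int s) * Cb (real k + b) (int s)"

lemma jacobiP_hs: "jacobiP k a b x = hs k (cf k a b) ((x-1)/2) ((x+1)/2)"
  unfolding jacobiP_def hs_def cf_def Cb_def
  by (intro sum.cong refl) (auto simp: nat_diff_distrib)

lemma coef_F1_inst:
  assumes "s \<le> n"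
  shows "of_nat (Suc s) * cf (Suc n) a b (Suc s) + of_nat (Suc n - s) * cf (Suc n) a b s
     = (real n + a + b + 2) * cf n (a+1) (b+1) s"
proof -
  have 1: "int (Suc n) - int (Suc s) = int n - int s" by simp
  have 2: "int (Suc n) - int s = int n - int s + 1" by simp
  have 3: "of_nat (Suc n - s) = real_of_int (int n - int s) + 1" using assms by (simp add: of_nat_diff)
  have 4: "real n + (a + 1) = real (Suc n) + a" "real n + (b + 1) = real (Suc n) + b" by simp_all
  show ?thesis
    using coefF1[of "int s" "real (Suc n) + a" "int n" "real (Suc n) + b"]
    unfolding cf_def 1 2 3 4 by (simp add: algebra_simps)
qed

lemma jacobi_deriv:
  "((jacobiP (Suc n) a b) has_real_derivative ((real n + a + b + 2)/2 * jacobiP n (a+1) (b+1) x)) (at x)"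
proof -
  have eq: "jacobiP (Suc n) a b = (\<lambda>x. hs (Suc n) (cf (Suc n) a b) ((x-1)/2) ((x+1)/2))"
    by (rule ext, rule jacobiP_hs)
  have "dhs (Suc n) (cf (Suc n) a b) ((x-1)/2) ((x+1)/2) = (real n + a + b + 2)/2 * jacobiP n (a+1) (b+1) x"
  proof -
    have "dhs (Suc n) (cf (Suc n) a b) ((x-1)/2) ((x+1)/2)
      = hs n (\<lambda>s. of_nat (Suc s) * cf (Suc n) a b (Suc s) + of_nat (Suc n - s) * cf (Suc n) a b s) ((x-1)/2) ((x+1)/2) / 2"
      by (simp only: dhs_Suc hs_add)
    also have "\<dots> = hs n (\<lambda>s. (real n + a + b + 2) * cf n (a+1) (b+1) s) ((x-1)/2) ((x+1)/2) / 2"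
      by (rule arg_cong[where f="\<lambda>u. u/2"], rule hs_cong, rule coef_F1_inst)
    also have "\<dots> = (real n + a + b + 2)/2 * jacobiP n (a+1) (b+1) x"
      by (simp add: jacobiP_hs hs_cmult[symmetric])
    finally show ?thesis .
  qed
  then show ?thesis using hs_deriv[of "Suc n" "cf (Suc n) a b" x] unfolding eq by metis
qed

lemma jacobi_lower:
  fixes x a b :: real
  defines "X \<equiv> (x-1)/2" and "Y \<equiv> (x+1)/2"
  shows "(1 - x^2) * dhs n (cf n (a+1) (b+1)) X Y + (-(a-b) - (a+b+2)*x) * hs n (cf n (a+1) (b+1)) X Y
     = -2*(real n+1) * jacobiP (Suc n) a b x"
proof -
  define d where "d = cf n (a+1) (b+1)"
  define r where "r = real n + (a+1)"
  define t where "t = real n + (b+1)"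
  have d_eq: "d s = Cb r (int n - int s) * Cb t (int s)" for s unfolding d_def cf_def r_def t_def by simp
  have p: "1 - x^2 = -4 * (X * Y)"
    unfolding X_def Y_def by (simp add: power2_eq_square field_simps)
  have q: "-(a-b) - (a+b+2)*x = -2*(b+1)*X - 2*(a+1)*Y"
    unfolding X_def Y_def by (simp add: field_simps)
  define g1 where "g1 s = (of_nat s + a + 1) * (Cb r (int n - int s) * Cb t (int s))" for s
  define g2 where "g2 s = (t - of_int (int s - 1)) * (Cb r (int n - int s + 1) * Cb t (int s - 1))" for s
  have Yg: "Y * hs n (\<lambda>s. of_nat s * d s + (a+1) * d s) X Y = hs (Suc n) g1 X Y"
    by (rule hs_Y) (auto simp: g1_def d_eq algebra_simps)
  have Xg: "X * hs n (\<lambda>s. of_nat (n-s) * d s + (b+1) * d s) X Y = hs (Suc n) g2 X Y"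
    by (rule hs_X) (auto simp: g2_def d_eq algebra_simps t_def of_nat_diff)
  have LHS: "(1 - x^2) * dhs n d X Y + (-(a-b) - (a+b+2)*x) * hs n d X Y
     = -2 * (Y * hs n (\<lambda>s. of_nat s * d s + (a+1) * d s) X Y + X * hs n (\<lambda>s. of_nat (n-s) * d s + (b+1) * d s) X Y)"
  proof -
    have "(1 - x^2) * dhs n d X Y = -4 * (X * Y * dhs n d X Y)" unfolding p by simp
    also have "\<dots> = -2 * (Y * hs n (\<lambda>s. of_nat s * d s) X Y + X * hs n (\<lambda>s. of_nat (n-s) * d s) X Y)"
      unfolding XY_dhs by simp
    finally show ?thesis unfolding q hs_add[symmetric] hs_cmult[symmetric] by (simp add: algebra_simps)
  qed
  have coef: "g1 s + g2 s = (real n + 1) * cf (Suc n) a b s" if "s \<le> Suc n" for s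
  proof -
    have e1: "real (Suc n) + a = r" "real (Suc n) + b = t" unfolding r_def t_def by simp_all
    have e2: "int (Suc n) - int s = int n - int s + 1" by simp
    have c: "cf (Suc n) a b s = Cb r (int n - int s + 1) * Cb t (int s)" unfolding cf_def e1 e2 ..
    have A: "of_nat s + a + 1 = r - of_int (int n - int s)" unfolding r_def by simp
    show ?thesis unfolding g1_def g2_def c A
      using coefE[of r "int n" "int s" t] by simp
  qed
  have "(1 - x^2) * dhs n d X Y + (-(a-b) - (a+b+2)*x) * hs n d X Y = -2 * (hs (Suc n) g1 X Y + hs (Suc n) g2 X Y)"
    unfolding LHS Yg Xg ..
  also have "\<dots> = -2 * hs (Suc n) (\<lambda>s. g1 s + g2 s) X Y" unfolding hs_add ..
  also have "\<dots> = -2 * hs (Suc n) (\<lambda>s. (real n + 1) * cf (Suc n) a b s) X Y"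
    by (rule arg_cong[where f="\<lambda>u. -2*u"], rule hs_cong, rule coef)
  also have "\<dots> = -2*(real n+1) * jacobiP (Suc n) a b x"
    unfolding jacobiP_hs X_def Y_def hs_cmult[symmetric] by (simp add: algebra_simps)
  finally show ?thesis unfolding d_def .
qed

lemma jacobi_F3:
  fixes x a b :: real and n :: nat
  defines "X \<equiv> (x-1)/2" and "Y \<equiv> (x+1)/2"
  defines "\<rho> \<equiv> 2 * real (Suc n) + a + b"
  shows "\<rho> * (1 - x^2) * dhs (Suc n) (cf (Suc n) a b) X Y
     = real (Suc n) * ((a - b) - \<rho> * x) * jacobiP (Suc n) a b x
       + 2 * (real (Suc n) + a) * (real (Suc n) + b) * jacobiP n a b x"
proof -
  define k where "k = Suc n"
  define r where "r = real k + a"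
  define t where "t = real k + b"
  define c where "c = cf k a b"
  define K where "K = int k"
  have c_eq: "c s = Cb r (K - int s) * Cb t (int s)" for s unfolding c_def cf_def r_def t_def K_def by simp
  define e' where "e' s = Cb (r-1) (K - 1 - int s) * Cb (t-1) (int s)" for s
  define e1 where "e1 s = Cb (r-1) (K - int s) * Cb (t-1) (int s - 1)" for s
  have rn: "real n + a = r - 1" "real n + b = t - 1" unfolding r_def t_def k_def by simp_all
  have Kn: "int n - int s = K - 1 - int s" for s unfolding K_def k_def by simp
  have z_eq: "cf n a b s = e' s" for s unfolding cf_def e'_def rn Kn ..
  have Yz: "Y * hs n (cf n a b) X Y = hs k e' X Y" unfolding k_def
    by (rule hs_Y) (simp_all add: z_eq e'_def K_def k_def)
  have Xz: "X * hs n (cf n a b) X Y = hs k e1 X Y" unfolding k_def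
  proof (rule hs_X)
    show "e1 0 = 0" unfolding e1_def by simp
    fix s assume "s \<le> n"
    have i: "K - int (Suc s) = K - 1 - int s" "int (Suc s) - 1 = int s" by simp_all
    show "e1 (Suc s) = cf n a b s" unfolding z_eq e1_def e'_def i ..
  qed
  have YX: "Y - X = 1" unfolding X_def Y_def by (simp add: field_simps)
  have z2: "jacobiP n a b x = Y * (hs k e' X Y) - 2 * (X * hs k e' X Y) + X * hs k e1 X Y"
  proof -
    have "jacobiP n a b x = (Y - X) * ((Y - X) * hs n (cf n a b) X Y)" unfolding YX by (simp add: jacobiP_hs X_def Y_def)
    also have "\<dots> = Y * (Y * hs n (cf n a b) X Y) - 2 * (X * (Y * hs n (cf n a b) X Y)) + X * (X * hs n (cf n a b) X Y)"
      by (simp add: algebra_simps)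
    finally show ?thesis unfolding Yz Xz .
  qed
  have p: "1 - x^2 = -4 * (X * Y)"
    unfolding X_def Y_def by (simp add: power2_eq_square field_simps)
  have q: "(a - b) - \<rho> * x = -2*r*X - 2*t*Y"
    unfolding X_def Y_def r_def t_def \<rho>_def k_def by (simp add: field_simps)
  define F where "F s = (\<rho> * of_nat s - real k * t) * c s + r * t * e' s" for s
  define G where "G s = (\<rho> * (real k - of_nat s) - real k * r) * c s - 2 * (r * t * e' s) + r * t * e1 s" for s
  have main: "\<rho> * (1 - x^2) * dhs k c X Y - real k * ((a - b) - \<rho> * x) * hs k c X Y - 2 * r * t * jacobiP n a b x
     = -2 * (Y * hs k F X Y + X * hs k G X Y)"
  proof -
    have m1: "\<rho> * (1 - x^2) * dhs k c X Y = -2 * \<rho> * (Y * hs k (\<lambda>s. of_nat s * c s) X Y + X * hs k (\<lambda>s. of_nat (k-s) * c s) X Y)"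
    proof -
      have "\<rho> * (1 - x^2) * dhs k c X Y = -4 * \<rho> * (X * Y * dhs k c X Y)" unfolding p by (simp add: algebra_simps)
      also have "\<dots> = -2 * \<rho> * (Y * hs k (\<lambda>s. of_nat s * c s) X Y + X * hs k (\<lambda>s. of_nat (k-s) * c s) X Y)"
        unfolding XY_dhs by simp
      finally show ?thesis .
    qed
    have m2: "hs k F X Y = hs k (\<lambda>s. \<rho> * (of_nat s * c s)) X Y - real k * t * hs k c X Y + r * t * hs k e' X Y"
      unfolding F_def hs_cmult hs_diff hs_add by (rule hs_cong) (simp add: algebra_simps)
    have m3: "hs k G X Y = hs k (\<lambda>s. \<rho> * (of_nat (k-s) * c s)) X Y - real k * r * hs k c X Y
        - 2 * (r * t * hs k e' X Y) + r * t * hs k e1 X Y"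
      unfolding G_def hs_cmult hs_diff hs_add by (rule hs_cong) (simp add: algebra_simps of_nat_diff)
    show ?thesis unfolding z2 q m1 m2 m3 by (simp add: algebra_simps hs_cmult[symmetric])
  qed
  define F2 where "F2 s = (\<rho> * of_int (int s) - of_int K * t) * (Cb r (K - int s) * Cb t (int s))
     + r*t*(Cb (r-1) (K-1-int s) * Cb (t-1) (int s))" for s
  define G2 where "G2 s = (\<rho> * (of_int K - of_int (int s) + 1) - of_int K * r) * (Cb r (K - int s + 1) * Cb t (int s - 1))
    - 2*(r*t*(Cb (r-1) (K - int s) * Cb (t-1) (int s - 1))) + r*t*(Cb (r-1) (K - int s + 1) * Cb (t-1) (int s - 2))" for s
  have YF: "Y * hs k F X Y = hs (Suc k) F2 X Y"
  proof (rule hs_Y)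
    show "F2 (Suc k) = 0" unfolding F2_def K_def by simp
    fix s assume "s \<le> k"
    show "F2 s = F s" unfolding F2_def F_def c_eq e'_def K_def by simp
  qed
  have XG: "X * hs k G X Y = hs (Suc k) G2 X Y"
  proof (rule hs_X)
    show "G2 0 = 0" unfolding G2_def by simp
    fix s assume s: "s \<le> k"
    have i: "K - int (Suc s) + 1 = K - int s" "int (Suc s) - 1 = int s" "int (Suc s) - 2 = int s - 1"
      "K - int (Suc s) = K - 1 - int s" by simp_all
    have ii: "of_int K - of_int (int (Suc s)) + 1 = real k - of_nat s" unfolding K_def by simp
    have j: "K - 1 - int s + 1 = K - int s" "real_of_int K = real k" unfolding K_def by simp_all
    show "G2 (Suc s) = G s" unfolding G2_def G_def c_eq e'_def e1_def i ii by (simp only: j)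
  qed
  have zero: "hs (Suc k) F2 X Y + hs (Suc k) G2 X Y = 0"
  proof -
    have h: "r = real_of_int K + a" "t = real_of_int K + b" "\<rho> = 2 * of_int K + a + b"
      unfolding r_def t_def \<rho>_def K_def k_def by simp_all
    have "F2 s + G2 s = 0" for s unfolding F2_def G2_def using coefF3[OF h, of "int s"] by linarith
    then show ?thesis unfolding hs_add by (intro hs_zero)
  qed
  have "\<rho> * (1 - x^2) * dhs k c X Y - real k * ((a - b) - \<rho> * x) * hs k c X Y - 2 * r * t * jacobiP n a b x = 0"
    unfolding main YF XG using zero by simp
  then show ?thesis unfolding jacobiP_hs X_def[symmetric] Y_def[symmetric] k_def c_def r_def t_def
    by (simp add: algebra_simps)
qed



definition wt :: "real \<Rightarrow> real \<Rightarrow> real \<Rightarrow> real" where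
  "wt a b x = (1-x) powr a * (1+x) powr b"

lemma jacobiP_0: "jacobiP 0 a b x = 1"
  unfolding jacobiP_def by simp

lemma image_affine_01: "(\<lambda>x::real. 2 * x + -1) ` {0..1} = {-1..1}"
proof
  show "(\<lambda>x::real. 2 * x + -1) ` {0..1} \<subseteq> {-1..1}" by auto
  show "{-1..1} \<subseteq> (\<lambda>x::real. 2 * x + -1) ` {0..1}"
  proof
    fix y :: real assume "y \<in> {-1..1}"
    then show "y \<in> (\<lambda>x::real. 2 * x + -1) ` {0..1}"
      by (intro image_eqI[where x="(y+1)/2"]) (auto simp: field_simps)
  qed
qed

lemma wt_integral:
  assumes a: "a > 0" and b: "b > 0"
  shows "(wt a b has_integral (2 powr (a+b+1) * Beta (a+1) (b+1))) {-1..1}"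
proof -
  have B: "((\<lambda>t. t powr (b+1 - 1) * (1 - t) powr (a+1 - 1)) has_integral Beta (b+1) (a+1)) (cbox 0 1)"
    using has_integral_Beta_real[of "b+1" "a+1"] a b by simp
  have "((\<lambda>x. (\<lambda>t. t powr (b+1 - 1) * (1 - t) powr (a+1 - 1)) ((1/2) *\<^sub>R x + 1/2)) has_integral
        (1 / \<bar>1/2\<bar> ^ DIM(real)) *\<^sub>R Beta (b+1) (a+1)) ((\<lambda>x. (1 / (1/2)) *\<^sub>R x + -((1 / (1/2)) *\<^sub>R (1/2))) ` cbox 0 1)"
    by (rule has_integral_affinity[OF B]) simp
  then have I: "((\<lambda>x. ((x+1)/2) powr b * ((1-x)/2) powr a) has_integral (2 * Beta (b+1) (a+1))) {-1..1}"
    using image_affine_01 by (simp add: field_simps)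
  have eq: "((x+1)/2) powr b * ((1-x)/2) powr a = wt a b x / 2 powr (a+b)" for x
    unfolding wt_def powr_divide powr_add by (simp add: field_simps)
  have "((\<lambda>x. 2 powr (a+b) * (((x+1)/2) powr b * ((1-x)/2) powr a)) has_integral (2 powr (a+b) * (2 * Beta (b+1) (a+1)))) {-1..1}"
    by (rule has_integral_mult_right[OF I])
  moreover have "2 powr (a+b) * (((x+1)/2) powr b * ((1-x)/2) powr a) = wt a b x" for x
    unfolding eq by simp
  moreover have "2 powr (a+b) * (2 * Beta (b+1) (a+1)) = 2 powr (a+b+1) * Beta (a+1) (b+1)"
    by (simp add: powr_add Beta_commute)
  ultimately show ?thesis by simp
qed

lemma jacobiP_has_deriv: "((jacobiP k a b) has_real_derivative dhs k (cf k a b) ((x-1)/2) ((x+1)/2)) (at x)"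
proof -
  have eq: "jacobiP k a b = (\<lambda>x. hs k (cf k a b) ((x-1)/2) ((x+1)/2))" by (rule ext, rule jacobiP_hs)
  show ?thesis unfolding eq by (rule hs_deriv)
qed

lemma jacobiP_isCont: "isCont (jacobiP k a b) x"
  using jacobiP_has_deriv DERIV_isCont by blast

lemma jacobiP_cont: "continuous_on S (jacobiP k a b)"
  using jacobiP_isCont continuous_at_imp_continuous_on by blast

lemma u_eq: "-1 \<le> x \<Longrightarrow> x \<le> 1 \<Longrightarrow> (1-x) powr (a+1) * (1+x) powr (b+1) = (1-x^2) * wt a b x"
  unfolding wt_def powr_add by (simp add: powr_one power2_eq_square algebra_simps)

lemma u_deriv:
  assumes "-1 < x" "x < 1"
  shows "((\<lambda>x. (1-x) powr (a+1) * (1+x) powr (b+1)) has_real_derivative wt a b x * (-(a-b) - (a+b+2)*x)) (at x)"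
proof -
  have "((\<lambda>x. (1-x) powr (a+1) * (1+x) powr (b+1)) has_real_derivative
     ((a+1) * (1-x) powr (a+1-1) * (-1) * (1+x) powr (b+1) + (1-x) powr (a+1) * ((b+1) * (1+x) powr (b+1-1) * 1))) (at x)"
    using assms by (auto intro!: derivative_eq_intros)
  moreover have "(a+1) * (1-x) powr (a+1-1) * (-1) * (1+x) powr (b+1) + (1-x) powr (a+1) * ((b+1) * (1+x) powr (b+1-1) * 1)
     = wt a b x * (-(a-b) - (a+b+2)*x)"
    using assms unfolding wt_def powr_add by (simp add: powr_one algebra_simps)
  ultimately show ?thesis by simp
qed

lemma u_cont:
  assumes "a > 0" "b > 0"
  shows "continuous_on {-1..1} (\<lambda>x::real. (1-x) powr (a+1) * (1+x) powr (b+1))"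
  using assms by (intro continuous_intros continuous_on_powr') auto

lemma u_ends: "a > 0 \<Longrightarrow> b > 0 \<Longrightarrow> (1-1) powr (a+1) * (1+1) powr (b+1) = (0::real)"
   "a > 0 \<Longrightarrow> b > 0 \<Longrightarrow> (1-(-1)) powr (a+1) * (1+(-1)) powr (b+1) = (0::real)"
  by simp_all

lemma Gamma_plus1_pos: "(z::real) > 0 \<Longrightarrow> Gamma (z + 1) = z * Gamma z"
  by (rule Gamma_plus1) (auto elim!: nonpos_Ints_cases)

lemma hsq_0: "a > 0 \<Longrightarrow> b > 0 \<Longrightarrow> jacobi_hsq 0 a b = 2 powr (a+b+1) * Beta (a+1) (b+1)"
proof -
  assume a: "a > 0" and b: "b > 0"
  have g: "Gamma (a + 1 + (b + 1)) = (a+b+1) * Gamma (a+b+1)"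
  proof -
    have "a + 1 + (b + 1) = (a+b+1) + 1" by simp
    then show ?thesis using Gamma_plus1_pos[of "a+b+1"] a b by simp
  qed
  have h: "jacobi_hsq 0 a b = 2 powr (a+b+1) * Gamma (a+1) * Gamma (b+1) / ((a+b+1) * Gamma (a+b+1))"
    unfolding jacobi_hsq_def by simp
  show ?thesis unfolding h Beta_def g by simp
qed

lemma hsq_Suc: "a > 0 \<Longrightarrow> b > 0 \<Longrightarrow>
   jacobi_hsq (Suc n) a b = (real n + a + b + 2) / (4 * (real n + 1)) * jacobi_hsq n (a+1) (b+1)"
proof -
  assume a: "a > 0" and b: "b > 0"
  define GA where "GA = Gamma (real n + a + 2)"
  define GB where "GB = Gamma (real n + b + 2)"
  define GS where "GS = Gamma (real n + a + b + 2)"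
  have gp: "GS > 0" unfolding GS_def using a b by (intro Gamma_real_pos) simp
  have r1: "Gamma (real (Suc n) + a + 1) = GA" "Gamma (real (Suc n) + b + 1) = GB"
    "Gamma (real (Suc n) + a + b + 1) = GS" "Gamma (real n + (a + 1) + 1) = GA" "Gamma (real n + (b + 1) + 1) = GB"
    unfolding GA_def GB_def GS_def by (simp_all add: add_ac)
  have r2: "Gamma (real n + (a + 1) + (b + 1) + 1) = (real n + a + b + 2) * GS"
  proof -
    have "real n + (a + 1) + (b + 1) + 1 = (real n + a + b + 2) + 1" by simp
    then show ?thesis unfolding GS_def using Gamma_plus1_pos[of "real n + a + b + 2"] a b by simp
  qed
  have p: "(2::real) powr (a + 1 + (b + 1) + 1) = 4 * 2 powr (a+b+1)"
  proof -
    have "a + 1 + (b + 1) + 1 = (a+b+1) + 2" by simp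
    then show ?thesis unfolding powr_add by simp
  qed
  have h1: "jacobi_hsq (Suc n) a b = (2 powr (a+b+1) * GA * GB) / ((2 * real n + a + b + 3) * ((real n + 1) * fact n) * GS)"
    unfolding jacobi_hsq_def r1 by (simp add: add_ac)
  have h2: "jacobi_hsq n (a+1) (b+1) = 4 * (2 powr (a+b+1) * GA * GB) / ((2 * real n + a + b + 3) * fact n * ((real n + a + b + 2) * GS))"
    unfolding jacobi_hsq_def r1 r2 p by (simp add: add_ac)
  have pos: "2 * real n + a + b + 3 > 0" "real n + a + b + 2 > 0" using a b by simp_all
  have fn: "(fact n :: real) > 0" by simp
  have gen: "c \<noteq> 0 \<Longrightarrow> D \<noteq> 0 \<Longrightarrow> f \<noteq> 0 \<Longrightarrow> G \<noteq> 0 \<Longrightarrow> N + 1 \<noteq> 0 \<Longrightarrow>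
     P / (D * ((N+1) * f) * G) = c / (4 * (N+1)) * (4 * P / (D * f * (c * G)))" for c D f G N P :: real
    by (simp add: divide_simps)
  show ?thesis unfolding h1 h2 using gp pos fn
    by (intro gen) auto
qed

lemma jacobi_norm:
  "0 < a \<Longrightarrow> 0 < b \<Longrightarrow> ((\<lambda>x. wt a b x * (jacobiP k a b x)^2) has_integral jacobi_hsq k a b) {-1..1}"
proof (induction k arbitrary: a b)
  case 0
  then show ?case using wt_integral[of a b] by (simp add: jacobiP_0 hsq_0)
next
  case (Suc n)
  note a = Suc.prems(1) and b = Suc.prems(2)
  define u where "u x = (1-x) powr (a+1) * (1+x) powr (b+1)" for x :: real
  define y where "y = jacobiP (Suc n) a b"
  define y1 where "y1 = jacobiP n (a+1) (b+1)"
  define m where "m = (real n + a + b + 2)/2"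
  define F where "F x = u x * y1 x * y x" for x
  define F' where "F' x = -2 * (real n + 1) * (wt a b x * (y x)^2) + m * (u x * (y1 x)^2)" for x
  have IH: "((\<lambda>x. u x * (y1 x)^2) has_integral jacobi_hsq n (a+1) (b+1)) {-1..1}"
    using Suc.IH[of "a+1" "b+1"] a b unfolding u_def y1_def wt_def by simp
  have der: "(F has_real_derivative F' x) (at x)" if x: "-1 < x" "x < 1" for x
  proof -
    have d1: "(u has_real_derivative wt a b x * (-(a-b) - (a+b+2)*x)) (at x)"
      unfolding u_def[abs_def] using u_deriv[OF x] .
    have d2: "(y1 has_real_derivative dhs n (cf n (a+1) (b+1)) ((x-1)/2) ((x+1)/2)) (at x)"
      unfolding y1_def by (rule jacobiP_has_deriv)
    have d3: "(y has_real_derivative m * y1 x) (at x)"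
      unfolding y_def y1_def m_def using jacobi_deriv[of n a b x] by simp
    have "(F has_real_derivative (wt a b x * (-(a-b) - (a+b+2)*x) * y1 x + dhs n (cf n (a+1) (b+1)) ((x-1)/2) ((x+1)/2) * u x) * y x
        + (m * y1 x) * (u x * y1 x)) (at x)"
      unfolding F_def[abs_def] by (rule DERIV_mult[OF DERIV_mult[OF d1 d2] d3])
    moreover have "(wt a b x * (-(a-b) - (a+b+2)*x) * y1 x + dhs n (cf n (a+1) (b+1)) ((x-1)/2) ((x+1)/2) * u x) * y x
        + (m * y1 x) * (u x * y1 x) = F' x"
    proof -
      have ux: "u x = (1-x^2) * wt a b x" unfolding u_def using x by (intro u_eq) auto
      have "(wt a b x * (-(a-b) - (a+b+2)*x) * y1 x + dhs n (cf n (a+1) (b+1)) ((x-1)/2) ((x+1)/2) * u x)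
          = wt a b x * ((1 - x^2) * dhs n (cf n (a+1) (b+1)) ((x-1)/2) ((x+1)/2) + (-(a-b) - (a+b+2)*x) * y1 x)"
        unfolding ux by (simp add: algebra_simps)
      also have "\<dots> = wt a b x * (-2*(real n+1) * y x)"
        unfolding y1_def y_def jacobiP_hs[of n "a+1" "b+1"] jacobi_lower ..
      finally have E: "wt a b x * (-(a-b) - (a+b+2)*x) * y1 x + dhs n (cf n (a+1) (b+1)) ((x-1)/2) ((x+1)/2) * u x
         = wt a b x * (-2*(real n+1) * y x)" .
      show ?thesis unfolding E F'_def by (simp add: power2_eq_square algebra_simps)
    qed
    ultimately show ?thesis by simp
  qed
  have cu: "continuous_on {-1..1} u" unfolding u_def[abs_def] by (rule u_cont[OF a b])
  have cont: "continuous_on {-1..1} F"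
    unfolding F_def[abs_def] y_def y1_def
    by (intro continuous_on_mult cu jacobiP_cont)
  have "(F' has_integral (F 1 - F (-1))) {-1..1}"
    by (rule fundamental_theorem_of_calculus_interior)
       (use cont der in \<open>auto simp: has_real_derivative_iff_has_vector_derivative[symmetric]\<close>)
  moreover have "F 1 = 0" "F (-1) = 0" unfolding F_def u_def by simp_all
  ultimately have I0: "(F' has_integral 0) {-1..1}" by simp
  have I1: "((\<lambda>x. (m * (u x * (y1 x)^2) - F' x) / (2 * (real n + 1))) has_integral
      ((m * jacobi_hsq n (a+1) (b+1) - 0) / (2 * (real n + 1)))) {-1..1}"
    by (intro has_integral_divide has_integral_diff has_integral_mult_right IH I0)
  have eqf: "(m * (u x * (y1 x)^2) - F' x) / (2 * (real n + 1)) = wt a b x * (jacobiP (Suc n) a b x)^2" for x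
    unfolding F'_def y_def by (simp add: field_simps)
  have eqv: "(m * jacobi_hsq n (a+1) (b+1) - 0) / (2 * (real n + 1)) = jacobi_hsq (Suc n) a b"
    unfolding hsq_Suc[OF a b] m_def by (simp add: field_simps)
  show ?case using I1 unfolding eqf eqv .
qed



lemma Zalg:
  fixes K a b t y y1 z D m :: real
  assumes hm: "2*m = K+a+b+1"
  assumes E: "(1-t^2)*D + (-(a-b)-(a+b+2)*t)*y1 = -2*K*y"
  and F: "(2*K+a+b)*(1-t^2)*(m*y1) = K*((a-b)-(2*K+a+b)*t)*y + 2*(K+a)*(K+b)*z"
  shows "(-(a-b)-(a+b+2)*t)*(((2*K+a+b)^2-(a+b)^2)*y^2 - 4*((a-b)+(a+b)*t)*y*(m*y1) + 4*(1-t^2)*(m*y1)^2)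
     + (1-t^2)*(((2*K+a+b)^2-(a+b)^2)*(2*y*(m*y1)) - 4*((a+b)*y*(m*y1) + ((a-b)+(a+b)*t)*((m*y1)*(m*y1) + y*(m*D)))
          + 4*((-2*t)*(m*y1)^2 + (1-t^2)*(2*(m*y1)*(m*D))))
     = -8*(K+a)*(K+b)*y*z"
  using hm E F by algebra

lemma hsq_ratio: "a > 0 \<Longrightarrow> b > 0 \<Longrightarrow>
   jacobi_hsq n a b = (2*real n + a + b + 3) * (real n + 1) * (real n + a + b + 1)
      / ((real n + a + 1) * (real n + b + 1) * (2 * real n + a + b + 1)) * jacobi_hsq (Suc n) a b"
proof -
  assume a: "a > 0" and b: "b > 0"
  define GA where "GA = Gamma (real n + a + 1)"
  define GB where "GB = Gamma (real n + b + 1)"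
  define GS where "GS = Gamma (real n + a + b + 1)"
  have gp: "GS > 0" "GA > 0" "GB > 0" unfolding GS_def GA_def GB_def using a b by (auto intro!: Gamma_real_pos)
  have r1: "Gamma (real (Suc n) + a + 1) = (real n + a + 1) * GA" "Gamma (real (Suc n) + b + 1) = (real n + b + 1) * GB"
    "Gamma (real (Suc n) + a + b + 1) = (real n + a + b + 1) * GS"
  proof -
    have "real (Suc n) + a + 1 = (real n + a + 1) + 1" "real (Suc n) + b + 1 = (real n + b + 1) + 1"
      "real (Suc n) + a + b + 1 = (real n + a + b + 1) + 1" by simp_all
    then show "Gamma (real (Suc n) + a + 1) = (real n + a + 1) * GA" "Gamma (real (Suc n) + b + 1) = (real n + b + 1) * GB"
    "Gamma (real (Suc n) + a + b + 1) = (real n + a + b + 1) * GS"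
      unfolding GA_def GB_def GS_def using a b Gamma_plus1_pos by (metis add_pos_pos of_nat_0_le_iff add_nonneg_pos zero_less_one)+
  qed
  have h1: "jacobi_hsq (Suc n) a b = (2 powr (a+b+1) * GA * GB) * ((real n + a + 1) * (real n + b + 1)) /
     ((2 * real n + a + b + 3) * ((real n + 1) * fact n) * ((real n + a + b + 1) * GS))"
    unfolding jacobi_hsq_def r1 by (simp add: add_ac mult_ac)
  have h2: "jacobi_hsq n a b = (2 powr (a+b+1) * GA * GB) / ((2 * real n + a + b + 1) * fact n * GS)"
    unfolding jacobi_hsq_def GA_def GB_def GS_def by (simp add: add_ac)
  have pos: "2 * real n + a + b + 3 > 0" "real n + a + b + 1 > 0" "real n + a + 1 > 0" "real n + b + 1 > 0"
     "2 * real n + a + b + 1 > 0" using a b by simp_all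
  have fn: "(fact n :: real) > 0" by simp
  have gen: "D3 \<noteq> 0 \<Longrightarrow> S1 \<noteq> 0 \<Longrightarrow> A1 \<noteq> 0 \<Longrightarrow> B1 \<noteq> 0 \<Longrightarrow> D1 \<noteq> 0 \<Longrightarrow> f \<noteq> 0 \<Longrightarrow> G \<noteq> 0 \<Longrightarrow> N + 1 \<noteq> 0 \<Longrightarrow>
     P / (D1 * f * G) = D3 * (N + 1) * S1 / (A1 * B1 * D1) * (P * (A1 * B1) / (D3 * ((N+1) * f) * (S1 * G)))"
    for D3 S1 A1 B1 D1 f G N P :: real
    by (simp add: divide_simps)
  show ?thesis unfolding h1 h2 using gp pos fn by (intro gen) auto
qed

lemma wt_cont: "a > 0 \<Longrightarrow> b > 0 \<Longrightarrow> continuous_on {-1..1} (wt a b)"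
  unfolding wt_def[abs_def] by (intro continuous_intros continuous_on_powr') auto

lemma fin_alg:
  fixes S rr ss K c \<rho> h :: real
  assumes S: "S > 0" and S2: "S^2 = 16*rr * ss*K*c" and r: "rr > 0" "ss > 0" and p: "\<rho> - 1 > 0"
  shows "2*rr * ss*((S/(4*rr * ss))*h + ((\<rho>+1)*K*c/(rr * ss*(\<rho>-1))*h)/(S/(4*rr * ss))) = \<rho>*S/(\<rho>-1)*h"
proof -
  have "((\<rho>+1)*K*c/(rr * ss*(\<rho>-1))*h)/(S/(4*rr * ss)) = (\<rho>+1)*(16*rr * ss*K*c)*h/(4*rr * ss*(\<rho>-1)*S)"
    using S r p by (simp add: field_simps)
  also have "\<dots> = (\<rho>+1)*(S*S)*h/(4*rr * ss*(\<rho>-1)*S)" unfolding S2[symmetric] power2_eq_square ..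
  also have "\<dots> = ((\<rho>+1)*S*h * S)/((4*rr * ss*(\<rho>-1)) * S)" by (simp add: mult_ac)
  also have "\<dots> = (\<rho>+1)*S*h/(4*rr * ss*(\<rho>-1))" using S by (rule nonzero_mult_divide_mult_cancel_right[OF less_imp_neq[symmetric]])
  finally have e: "((\<rho>+1)*K*c/(rr * ss*(\<rho>-1))*h)/(S/(4*rr * ss)) = (\<rho>+1)*S*h/(4*rr * ss*(\<rho>-1))" .
  show ?thesis unfolding e using S r p by (simp add: field_simps)
qed

lemma main_n:
  fixes n :: nat and a b x :: real
  assumes a: "a > 0" and b: "b > 0" and x: "-1 \<le> x" "x \<le> 1"
  defines "K \<equiv> real (Suc n)"
  defines "\<rho> \<equiv> 2 * K + a + b"
  shows "(1 - x) powr (a + 1) * (1 + x) powr (b + 1) * jacobiW (Suc n) a b x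
    \<le> \<rho> * sqrt ((\<rho>^2 - (a-b)^2) * (\<rho>^2 - (a+b)^2)) / (\<rho> - 1) * jacobi_hsq (Suc n) a b"
proof -
  define y where "y = jacobiP (Suc n) a b"
  define y1 where "y1 = jacobiP n (a+1) (b+1)"
  define z where "z = jacobiP n a b"
  define m where "m = (real n + a + b + 2)/2"
  define D where "D t = dhs n (cf n (a+1) (b+1)) ((t-1)/2) ((t+1)/2)" for t
  define u where "u t = (1-t) powr (a+1) * (1+t) powr (b+1)" for t :: real
  define Wf where "Wf t = (\<rho>^2-(a+b)^2)*(y t)^2 - 4*((a-b)+(a+b)*t)*y t*(m*y1 t) + 4*(1-t^2)*(m*y1 t)^2" for t
  define Wf' where "Wf' t = (\<rho>^2-(a+b)^2)*(2*y t*(m*y1 t)) - 4*((a+b)*y t*(m*y1 t) + ((a-b)+(a+b)*t)*((m*y1 t)*(m*y1 t) + y t*(m*D t)))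
          + 4*((-2*t)*(m*y1 t)^2 + (1-t^2)*(2*(m*y1 t)*(m*D t)))" for t
  define rr where "rr = K + a"
  define ss where "ss = K + b"
  define Z where "Z t = u t * Wf t" for t
  define Z' where "Z' t = -8 * rr * ss * (wt a b t * (y t * z t))" for t
  have dy: "(y has_real_derivative m * y1 t) (at t)" for t
    unfolding y_def y1_def m_def using jacobi_deriv[of n a b t] by simp
  have dy1: "(y1 has_real_derivative D t) (at t)" for t
    unfolding y1_def D_def by (rule jacobiP_has_deriv)
  have dyalt: "dhs (Suc n) (cf (Suc n) a b) ((t-1)/2) ((t+1)/2) = m * y1 t" for t
    using DERIV_unique[OF jacobiP_has_deriv[of "Suc n" a b t] dy[of t, unfolded y_def]] .
  have E: "(1-t^2)*D t + (-(a-b)-(a+b+2)*t)*y1 t = -2*K*y t" for t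
    using jacobi_lower[where n=n and a=a and b=b and x=t] unfolding D_def y1_def y_def K_def jacobiP_hs[of n "a+1" "b+1", symmetric]
    by simp
  have F: "(2*K+a+b)*(1-t^2)*(m*y1 t) = K*((a-b)-(2*K+a+b)*t)*y t + 2*(K+a)*(K+b)*z t" for t
    using jacobi_F3[where n=n and a=a and b=b and x=t] unfolding dyalt y_def z_def K_def by (simp add: mult.assoc)
  have hm: "2*m = K+a+b+1" unfolding m_def K_def by simp
  have Wdef: "jacobiW (Suc n) a b t = Wf t" for t
  proof -
    have "deriv (jacobiP (Suc n) a b) t = m * y1 t" using DERIV_imp_deriv[OF dy[of t]] unfolding y_def .
    then show ?thesis unfolding jacobiW_def Let_def Wf_def y_def \<rho>_def K_def by simp
  qed
  have dZ: "(Z has_real_derivative Z' t) (at t)" if t: "-1 < t" "t < 1" for t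
  proof -
    have du: "(u has_real_derivative wt a b t * (-(a-b) - (a+b+2)*t)) (at t)"
      unfolding u_def[abs_def] using u_deriv[OF t] .
    have dW: "(Wf has_real_derivative Wf' t) (at t)"
      unfolding Wf_def[abs_def] Wf'_def
      by (rule derivative_eq_intros dy dy1 refl | simp)+ (simp add: algebra_simps power2_eq_square)
    have "(Z has_real_derivative (wt a b t * (-(a-b) - (a+b+2)*t)) * Wf t + Wf' t * u t) (at t)"
      unfolding Z_def[abs_def] by (rule DERIV_mult[OF du dW])
    moreover have "(wt a b t * (-(a-b) - (a+b+2)*t)) * Wf t + Wf' t * u t = Z' t"
    proof -
      have ut: "u t = (1-t^2) * wt a b t" unfolding u_def using t by (intro u_eq) auto
      have "(wt a b t * (-(a-b) - (a+b+2)*t)) * Wf t + Wf' t * u t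
         = wt a b t * ((-(a-b) - (a+b+2)*t) * Wf t + (1-t^2) * Wf' t)" unfolding ut by (simp add: algebra_simps)
      also have "(-(a-b) - (a+b+2)*t) * Wf t + (1-t^2) * Wf' t = -8*(K+a)*(K+b)*y t*z t"
        unfolding Wf_def Wf'_def \<rho>_def by (rule Zalg[OF hm E F])
      finally show ?thesis unfolding Z'_def rr_def ss_def by (simp add: algebra_simps)
    qed
    ultimately show ?thesis by simp
  qed
  have cy: "continuous_on S y" "continuous_on S y1" "continuous_on S z" for S
    unfolding y_def y1_def z_def by (rule jacobiP_cont)+
  have cu: "continuous_on {-1..1} u" unfolding u_def[abs_def] by (rule u_cont[OF a b])
  have contZ: "continuous_on {-1..1} Z"
    unfolding Z_def[abs_def] Wf_def[abs_def] by (intro continuous_intros cu cy)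
  have Zend: "Z (-1) = 0" "Z 1 = 0" unfolding Z_def u_def by simp_all
  have FTC1: "(Z' has_integral (Z x - Z (-1))) {-1..x}"
    by (rule fundamental_theorem_of_calculus_interior)
       (use x contZ dZ in \<open>auto simp: has_real_derivative_iff_has_vector_derivative[symmetric] intro: continuous_on_subset\<close>)
  have FTC2: "(Z' has_integral (Z 1 - Z x)) {x..1}"
    by (rule fundamental_theorem_of_calculus_interior)
       (use x contZ dZ in \<open>auto simp: has_real_derivative_iff_has_vector_derivative[symmetric] intro: continuous_on_subset\<close>)
  define S where "S = sqrt ((\<rho>^2 - (a-b)^2) * (\<rho>^2 - (a+b)^2))"
  have rpos: "rr > 0" "ss > 0" "K > 0" unfolding rr_def ss_def K_def using a b by simp_all
  have prod: "(\<rho>^2 - (a-b)^2) * (\<rho>^2 - (a+b)^2) = 16*rr * ss*K*(K+a+b)"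
    unfolding \<rho>_def rr_def ss_def by (simp add: power2_eq_square algebra_simps)
  have S2: "S^2 = 16*rr * ss*K*(K+a+b)" unfolding S_def prod using rpos a b by simp
  have Spos: "S > 0" unfolding S_def prod using rpos a b by simp
  define \<theta> where "\<theta> = S/(4*rr * ss)"
  have th: "\<theta> > 0" unfolding \<theta>_def using Spos rpos by simp
  define G where "G t = 4*rr * ss*(wt a b t * (\<theta>*(y t)^2 + (z t)^2/\<theta>))" for t
  have wpos: "wt a b t \<ge> 0" for t unfolding wt_def by simp
  have amgm: "\<theta>*(y t)^2 + (z t)^2/\<theta> - 2*(y t*z t) \<ge> 0" "\<theta>*(y t)^2 + (z t)^2/\<theta> + 2*(y t*z t) \<ge> 0" for t
  proof -
    have "\<theta>*(y t)^2 + (z t)^2/\<theta> - 2*(y t*z t) = (\<theta>*y t - z t)^2/\<theta>"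
      "\<theta>*(y t)^2 + (z t)^2/\<theta> + 2*(y t*z t) = (\<theta>*y t + z t)^2/\<theta>"
      using th by (simp_all add: field_simps power2_eq_square)
    then show "\<theta>*(y t)^2 + (z t)^2/\<theta> - 2*(y t*z t) \<ge> 0" "\<theta>*(y t)^2 + (z t)^2/\<theta> + 2*(y t*z t) \<ge> 0"
      using th by simp_all
  qed
  have le1: "Z' t \<le> G t" for t
  proof -
    have "0 \<le> 4*rr * ss*(wt a b t * (\<theta>*(y t)^2 + (z t)^2/\<theta> + 2*(y t*z t)))"
      using rpos wpos[of t] amgm(2)[of t] by simp
    then show ?thesis unfolding Z'_def G_def by (simp add: algebra_simps)
  qed
  have le2: "- G t \<le> Z' t" for t
  proof -
    have "0 \<le> 4*rr * ss*(wt a b t * (\<theta>*(y t)^2 + (z t)^2/\<theta> - 2*(y t*z t)))"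
      using rpos wpos[of t] amgm(1)[of t] by simp
    then show ?thesis unfolding Z'_def G_def by (simp add: algebra_simps)
  qed
  define hk where "hk = jacobi_hsq (Suc n) a b"
  define hn where "hn = jacobi_hsq n a b"
  have Nk: "((\<lambda>t. wt a b t * (y t)^2) has_integral hk) {-1..1}" unfolding y_def hk_def by (rule jacobi_norm[OF a b])
  have Nn: "((\<lambda>t. wt a b t * (z t)^2) has_integral hn) {-1..1}" unfolding z_def hn_def by (rule jacobi_norm[OF a b])
  have NG: "(G has_integral (4*rr * ss*(\<theta>*hk + hn/\<theta>))) {-1..1}"
  proof -
    have "((\<lambda>t. 4*rr * ss*(\<theta>*(wt a b t * (y t)^2) + (wt a b t * (z t)^2)/\<theta>)) has_integral (4*rr * ss*(\<theta>*hk + hn/\<theta>))) {-1..1}"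
      by (intro has_integral_mult_right has_integral_add has_integral_divide Nk Nn)
    moreover have "4*rr * ss*(\<theta>*(wt a b t * (y t)^2) + (wt a b t * (z t)^2)/\<theta>) = G t" for t
      unfolding G_def by (simp add: algebra_simps)
    ultimately show ?thesis by simp
  qed
  have Gint: "G integrable_on {-1..1}" using NG by blast
  define I1 where "I1 = integral {-1..x} G"
  define I2 where "I2 = integral {x..1} G"
  have HI1: "(G has_integral I1) {-1..x}" unfolding I1_def
    by (rule integrable_integral, rule integrable_subinterval_real[OF Gint]) (use x in auto)
  have HI2: "(G has_integral I2) {x..1}" unfolding I2_def
    by (rule integrable_integral, rule integrable_subinterval_real[OF Gint]) (use x in auto)
  have "(G has_integral (I1 + I2)) {-1..1}" by (rule has_integral_combine[OF x HI1 HI2])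
  then have sumI: "I1 + I2 = 4*rr * ss*(\<theta>*hk + hn/\<theta>)" using NG has_integral_unique by blast
  have Z1: "Z x \<le> I1"
    using has_integral_le[OF FTC1 HI1] le1 Zend by simp
  have Z2: "- I2 \<le> - Z x"
    using has_integral_le[OF has_integral_neg[OF HI2] FTC2] le2 Zend by simp
  have Zb: "Z x \<le> 2*rr * ss*(\<theta>*hk + hn/\<theta>)" using Z1 Z2 sumI by simp
  have hnk: "hn = (\<rho>+1)*K*(K+a+b)/(rr * ss*(\<rho>-1))*hk"
    unfolding hn_def hk_def hsq_ratio[OF a b, of n] unfolding \<rho>_def K_def rr_def ss_def
    by (simp add: algebra_simps)
  have rho1: "\<rho> - 1 > 0" unfolding \<rho>_def K_def using a b by simp
  have final: "2*rr * ss*(\<theta>*hk + hn/\<theta>) = \<rho>*S/(\<rho>-1)*hk"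
    unfolding hnk \<theta>_def by (rule fin_alg[OF Spos S2 rpos(1,2) rho1])
  have LZ: "(1 - x) powr (a + 1) * (1 + x) powr (b + 1) * jacobiW (Suc n) a b x = Z x"
    unfolding Z_def u_def Wdef ..
  show ?thesis unfolding LZ using Zb final unfolding S_def hk_def by simp
qed

theorem lemma7:
  fixes k :: nat and \<alpha> \<beta> x :: real
  assumes "k \<ge> 1" and "\<alpha> > \<beta>" and "\<beta> > 0"
    and "x \<in> {jacobi_gamma k \<alpha> \<beta> (-1) <..< jacobi_gamma k \<alpha> \<beta> 1}"
  shows "(1 - x) powr (\<alpha> + 1) * (1 + x) powr (\<beta> + 1) * jacobiW k \<alpha> \<beta> x
    \<le> (let \<eta> = \<alpha> - \<beta>; \<sigma> = \<alpha> + \<beta>; \<rho> = 2 * real k + \<alpha> + \<beta>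
        in \<rho> * sqrt ((\<rho>^2 - \<eta>^2) * (\<rho>^2 - \<sigma>^2)) / (\<rho> - 1)) * jacobi_hsq k \<alpha> \<beta>"
proof -
  obtain n where k: "k = Suc n" using assms(1) by (cases k) auto
  have a: "\<alpha> > 0" and b: "\<beta> > 0" using assms(2,3) by simp_all
  define \<eta> where "\<eta> = \<alpha> - \<beta>"
  define \<sigma> where "\<sigma> = \<alpha> + \<beta>"
  define \<rho> where "\<rho> = 2 * real k + \<alpha> + \<beta>"
  define P where "P = (\<rho>^2 - \<eta>^2) * (\<rho>^2 - \<sigma>^2)"
  have g1: "jacobi_gamma k \<alpha> \<beta> (-1) = (- sqrt P - \<eta> * \<sigma>) / \<rho>^2"
    unfolding jacobi_gamma_def Let_def P_def \<eta>_def \<sigma>_def \<rho>_def by simp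
  have g2: "jacobi_gamma k \<alpha> \<beta> 1 = (sqrt P - \<eta> * \<sigma>) / \<rho>^2"
    unfolding jacobi_gamma_def Let_def P_def \<eta>_def \<sigma>_def \<rho>_def by simp
  have ineq: "0 < \<eta>" "\<eta> < \<sigma>" "\<sigma> < \<rho>" unfolding \<eta>_def \<sigma>_def \<rho>_def using assms(1,2,3) by simp_all
  have rp: "\<rho>^2 > 0" using ineq by simp
  have es: "\<eta> * \<sigma> < \<rho>^2"
  proof -
    have "\<eta> * \<sigma> < \<sigma> * \<sigma>" using ineq by (intro mult_strict_right_mono) auto
    also have "\<dots> < \<rho> * \<rho>" using ineq by (intro mult_strict_mono) auto
    finally show ?thesis by (simp add: power2_eq_square)
  qed
  have es2: "0 \<le> \<eta> * \<sigma>" using ineq by simp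
  have P1: "P \<le> (\<rho>^2 - \<eta> * \<sigma>)^2"
  proof -
    have "(\<rho>^2 - \<eta> * \<sigma>)^2 - P = \<rho>^2 * (\<eta> - \<sigma>)^2" unfolding P_def by (simp add: power2_eq_square algebra_simps)
    then show ?thesis by (smt (verit) zero_le_power2 mult_nonneg_nonneg)
  qed
  have P2: "P \<le> (\<rho>^2 + \<eta> * \<sigma>)^2"
  proof -
    have "(\<rho>^2 + \<eta> * \<sigma>)^2 - P = \<rho>^2 * (\<eta> + \<sigma>)^2" unfolding P_def by (simp add: power2_eq_square algebra_simps)
    then show ?thesis by (smt (verit) zero_le_power2 mult_nonneg_nonneg)
  qed
  have s1: "sqrt P \<le> \<rho>^2 - \<eta> * \<sigma>"
    using real_sqrt_le_mono[OF P1] es by simp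
  have s2: "sqrt P \<le> \<rho>^2 + \<eta> * \<sigma>"
    using real_sqrt_le_mono[OF P2] es es2 by simp
  have lo: "-1 \<le> jacobi_gamma k \<alpha> \<beta> (-1)" unfolding g1 using s1 rp by (simp add: field_simps)
  have hi: "jacobi_gamma k \<alpha> \<beta> 1 \<le> 1" unfolding g2 using s2 rp by (simp add: field_simps)
  have x: "-1 \<le> x" "x \<le> 1" using assms(4) lo hi by auto
  show ?thesis unfolding Let_def k using main_n[OF a b x, of n] by simp
qed

end
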